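(* Let $K$ be a field, $\mathcal A$ a $K$-algebra, $\vartheta$ any one of the four types (left, right, pre-two-sided, two-sided), and $V$ a $K$-subspace of $\mathcal A$ such that every element of $\sqrt V$ is algebraic over $K$. Then $V$ is a $\vartheta$-Mathieu subspace of $\mathcal A$ if and only if $(e)_\vartheta\subseteq V$ for every idempotent $e\in V$.
   Context: All algebras are associative and unital. For a subset $S\subseteq\mathcal A$, $\sqrt S$ is the set of $a\in\mathcal A$ with $a^m\in S$ for all sufficiently large $m$. An idempotent is $e$ with $e^2=e$. Let $V$ be a $K$-subspace of $\mathcal A$. $V$ is a left (resp. right) Mathieu subspace if whenever $a\in\mathcal A$ satisfies $a^m\in V$ for all $m\ge1$, then for every $b\in\mathcal A$ there is $N$ with $ba^m\in V$ (resp. $a^mb\in V$) for all $m\ge N$; pre-two-sided if it is both left and right; two-sided if whenever $a^m\in V$ for all $m\ge1$, for all $b,c\in\mathcal A$ there is $N$ with $ba^mc\in V$ for all $m\ge N$. For $x\in\mathcal A$: $(x)_\vartheta$ is $\mathcal Ax$ if $\vartheta$ = left, $x\mathcal A$ if $\vartheta$ = right, the two-sided ideal generated by $x$ if $\vartheta$ = two-sided, and $x\mathcal A+\mathcal Ax$ if $\vartheta$ = pre-two-sided. *)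

theory Defs
  imports "HOL-Computational_Algebra.Polynomial"
begin

definition is_algebra :: "('k::field \<Rightarrow> 'a::ring_1 \<Rightarrow> 'a) \<Rightarrow> bool" where
  "is_algebra sc \<longleftrightarrow>
     (\<forall>c x y. sc c (x + y) = sc c x + sc c y) \<and>
     (\<forall>c d x. sc (c + d) x = sc c x + sc d x) \<and>
     (\<forall>c d x. sc (c * d) x = sc c (sc d x)) \<and>
     (\<forall>x. sc 1 x = x) \<and>
     (\<forall>c x y. sc c (x * y) = sc c x * y) \<and>
     (\<forall>c x y. sc c (x * y) = x * sc c y)"

definition is_subspace :: "('k::field \<Rightarrow> 'a::ring_1 \<Rightarrow> 'a) \<Rightarrow> 'a set \<Rightarrow> bool" where
  "is_subspace sc V \<longleftrightarrow> 0 \<in> V \<and> (\<forall>x\<in>V. \<forall>y\<in>V. x + y \<in> V) \<and> (\<forall>c. \<forall>x\<in>V. sc c x \<in> V)"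

definition algebraic_over :: "('k::field \<Rightarrow> 'a::ring_1 \<Rightarrow> 'a) \<Rightarrow> 'a \<Rightarrow> bool" where
  "algebraic_over sc a \<longleftrightarrow>
     (\<exists>p::'k poly. p \<noteq> 0 \<and> (\<Sum>i\<le>degree p. sc (coeff p i) (a ^ i)) = 0)"

definition rad :: "'a::monoid_mult set \<Rightarrow> 'a set" where
  "rad S = {a. \<exists>N. \<forall>m\<ge>N. a ^ m \<in> S}"

datatype mtype = LeftT | RightT | PreTwoSidedT | TwoSidedT

definition mathieu :: "mtype \<Rightarrow> 'a::ring_1 set \<Rightarrow> bool" where
  "mathieu t V \<longleftrightarrow> (\<forall>a. (\<forall>m\<ge>1. a ^ m \<in> V) \<longrightarrow>
     (case t of
        LeftT \<Rightarrow> (\<forall>b. \<exists>N. \<forall>m\<ge>N. b * a ^ m \<in> V)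
      | RightT \<Rightarrow> (\<forall>b. \<exists>N. \<forall>m\<ge>N. a ^ m * b \<in> V)
      | PreTwoSidedT \<Rightarrow> (\<forall>b. \<exists>N. \<forall>m\<ge>N. b * a ^ m \<in> V) \<and> (\<forall>b. \<exists>N. \<forall>m\<ge>N. a ^ m * b \<in> V)
      | TwoSidedT \<Rightarrow> (\<forall>b c. \<exists>N. \<forall>m\<ge>N. b * a ^ m * c \<in> V)))"

text \<open>The ideal (x)_t. The two-sided ideal generated by x is the set of finite sums
  of elements b*x*c (over a unital K-algebra this is automatically a K-subspace).\<close>
definition gen_ideal :: "mtype \<Rightarrow> 'a::ring_1 \<Rightarrow> 'a set" where
  "gen_ideal t x = (case t of
        LeftT \<Rightarrow> {a * x | a. True}
      | RightT \<Rightarrow> {x * a | a. True}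
      | PreTwoSidedT \<Rightarrow> {x * a + b * x | a b. True}
      | TwoSidedT \<Rightarrow> {(\<Sum>i<n. b i * x * c i) | (n::nat) b c. True})"

end

theory Submission
  imports Defs "HOL-Computational_Algebra.Polynomial"
begin

lemma ring_id: fixes u X v q w z :: "'a::comm_ring_1"
  shows "(u * X^s + v * q) * (w * X + z * q) = (u * w) * X^Suc s + (u * X^s * z + v * (w * X + z * q)) * q"
  by (simp add: algebra_simps)

lemma bez_pow:
  fixes q :: "'k::field poly"
  assumes "\<not> [:0, 1:] dvd q"
  shows "\<exists>u v. u * [:0,1:]^s + v * q = 1"
proof -
  obtain c q1 where q: "q = pCons c q1" by (cases q) auto
  have c: "c \<noteq> 0" using assms unfolding q by (auto simp: dvd_iff_poly_eq_0)
  have qx: "q = [:c:] + [:0,1:] * q1" unfolding q by (simp add: pCons_eq_iff)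
  have base: "(- smult (1/c) q1) * [:0,1:] + [:1/c:] * q = 1"
    using c unfolding qx by (simp add: algebra_simps smult_add_right)
  show ?thesis
  proof (induction s)
    case 0 show ?case by (rule exI[of _ 1], rule exI[of _ 0]) simp
  next
    case (Suc s)
    then obtain u v where uv: "u * [:0,1:]^s + v * q = 1" by blast
    have "(u * [:0,1:]^s + v * q) * ((- smult (1/c) q1) * [:0,1:] + [:1/c:] * q) = 1"
      using uv base by simp
    then have "(u * (- smult (1/c) q1)) * [:0,1:]^Suc s
       + (u * [:0,1:]^s * [:1/c:] + v * ((- smult (1/c) q1) * [:0,1:] + [:1/c:] * q)) * q = 1"
      by (simp only: ring_id)
    then show ?case by blast
  qed
qed
lemma poly_split:
  fixes p :: "'k::field poly"
  assumes "p \<noteq> 0"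
  shows "\<exists>s u v q. s \<ge> 1 \<and> u * [:0,1:]^s + v*q = 1 \<and> [:0,1:]^s * q = [:0,1:] * p"
proof -
  obtain q where q: "p = [:- 0, 1:] ^ order 0 p * q" "\<not> [:- 0, 1:] dvd q"
    using order_decomp[OF assms] by blast
  have q2: "\<not> [:0, 1:] dvd q" using q(2) by simp
  define s where "s = Suc (order 0 p)"
  obtain u v where uv: "u * [:0,1:]^s + v * q = 1" using bez_pow[OF q2] by blast
  have "[:0,1:]^s * q = [:0,1:] * p" using q(1) by (simp add: s_def mult.assoc)
  then show ?thesis using uv s_def by (intro exI[of _ s] exI[of _ u] exI[of _ v] exI[of _ q]) simp
qed

locale alg =
  fixes sc :: "'k::field \<Rightarrow> 'a::ring_1 \<Rightarrow> 'a" and a :: 'a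
  assumes A: "is_algebra sc"
begin

lemma sc_add: "sc (c + d) x = sc c x + sc d x" using A unfolding is_algebra_def by blast
lemma sc_mul: "sc (c * d) x = sc c (sc d x)" using A unfolding is_algebra_def by blast
lemma sc_one: "sc 1 x = x" using A unfolding is_algebra_def by blast
lemma sc_l: "sc c (x * y) = sc c x * y" using A unfolding is_algebra_def by blast
lemma sc_r: "sc c (x * y) = x * sc c y" using A unfolding is_algebra_def by blast

lemma sc_zero: "sc 0 x = 0"
  using sc_add[of 0 0 x] by simp

lemma sc_eq: "sc c x = sc c 1 * x" using sc_l[of c 1 x] by simp
lemma sc_eq2: "sc c x = x * sc c 1" using sc_r[of c x 1] by simp
lemma sc_comm: "sc c 1 * x = x * sc c 1" using sc_eq sc_eq2 by metis
lemma sc1_mul: "sc (c*d) 1 = sc c 1 * sc d 1"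
  using sc_mul[of c d 1] sc_eq by metis
lemma sc1_add: "sc (c+d) 1 = sc c 1 + sc d 1" by (rule sc_add)

definition ev :: "'k poly \<Rightarrow> 'a" where
  "ev p = (\<Sum>i\<le>degree p. sc (coeff p i) (a ^ i))"

lemma ev_0: "ev 0 = 0" by (simp add: ev_def sc_zero)

lemma ev_pCons: "ev (pCons c p) = sc c 1 + a * ev p"
proof (cases "p = 0")
  case True then show ?thesis by (simp add: ev_def sc_zero)
next
  case False
  then have d: "degree (pCons c p) = Suc (degree p)" by simp
  have "ev (pCons c p) = sc c 1 + (\<Sum>i\<le>degree p. sc (coeff p i) (a ^ Suc i))"
    unfolding ev_def d sum.atMost_Suc_shift by simp
  also have "(\<Sum>i\<le>degree p. sc (coeff p i) (a ^ Suc i)) = a * ev p"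
    unfolding ev_def sum_distrib_left by (simp add: sc_r)
  finally show ?thesis .
qed

lemma ev_add: "ev (p + q) = ev p + ev q"
proof (induction p arbitrary: q rule: pCons_induct)
  case 0 then show ?case by (simp add: ev_0)
next
  case (pCons c p)
  show ?case
  proof (cases q rule: pCons_cases)
    case (pCons d q')
    have "ev (p + q') = ev p + ev q'" using pCons.IH[of q'] by (simp add: add.commute)
    then show ?thesis unfolding pCons add_pCons ev_pCons sc1_add
      by (simp add: algebra_simps)
  qed
qed

lemma ev_smult: "ev (smult c q) = sc c 1 * ev q"
proof (induction q rule: pCons_induct)
  case 0 then show ?case by (simp add: ev_0)
next
  case (pCons d p)
  have "ev (smult c (pCons d p)) = sc c 1 * sc d 1 + a * (sc c 1 * ev p)"
    using pCons.IH by (simp add: ev_pCons sc1_mul)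
  also have "\<dots> = sc c 1 * (sc d 1 + a * ev p)"
  proof -
    have "a * (sc c 1 * ev p) = sc c 1 * (a * ev p)"
      by (metis mult.assoc sc_comm)
    then show ?thesis by (simp add: distrib_left)
  qed
  finally show ?case by (simp add: ev_pCons)
qed

lemma ev_mult: "ev (p * q) = ev p * ev q"
proof (induction p rule: pCons_induct)
  case 0 then show ?case by (simp add: ev_0)
next
  case (pCons c p)
  show ?case unfolding mult_pCons_left ev_add ev_smult ev_pCons pCons.IH
    by (simp add: sc_zero algebra_simps)
qed

lemma ev_one: "ev 1 = 1"
  using ev_pCons[of 1 0] by (simp add: one_pCons ev_0 sc_one)

lemma ev_X: "ev [:0,1:] = a"
  using ev_pCons[of 0 "[:1:]"] ev_pCons[of 1 0] by (simp add: ev_0 sc_one sc_zero)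

lemma ev_Xp: "ev ([:0,1:]^n) = a^n"
  by (induction n) (simp_all only: power_Suc power_0 ev_one ev_mult ev_X)

lemma ev_comm: "ev p * ev q = ev q * ev p"
  by (metis ev_mult mult.commute)

lemma ev_in_V:
  assumes V: "is_subspace sc V" and aV: "\<forall>m\<ge>1. a ^ m \<in> V"
  shows "ev u * a ^ Suc k \<in> V"
proof (induction u arbitrary: k rule: pCons_induct)
  case 0 then show ?case using V by (simp add: ev_0 is_subspace_def)
next
  case (pCons c u)
  have au: "a * ev u = ev u * a" using ev_comm[of "[:0,1:]" u] by (simp add: ev_X)
  have "ev (pCons c u) * a ^ Suc k = sc c 1 * a ^ Suc k + a * ev u * a ^ Suc k"
    by (simp add: ev_pCons distrib_right)
  also have "\<dots> = sc c (a ^ Suc k) + ev u * a ^ Suc (Suc k)"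
    unfolding au sc_eq[of c "a ^ Suc k"] by (simp only: mult.assoc power_Suc[of a "Suc k"])
  finally have "ev (pCons c u) * a ^ Suc k = sc c (a ^ Suc k) + ev u * a ^ Suc (Suc k)" .
  moreover have "sc c (a ^ Suc k) \<in> V"
  proof -
    have "Suc k \<ge> 1" by simp
    then have "a ^ Suc k \<in> V" using aV by blast
    then show ?thesis using V unfolding is_subspace_def by blast
  qed
  moreover have "ev u * a ^ Suc (Suc k) \<in> V" by (rule pCons.IH)
  ultimately show ?case using V unfolding is_subspace_def by metis
qed

end

lemma idem_exists:
  fixes sc :: "'k::field \<Rightarrow> 'a::ring_1 \<Rightarrow> 'a"
  assumes A: "is_algebra sc" and V: "is_subspace sc V"
    and aV: "\<forall>m\<ge>1. a ^ m \<in> V" and alg: "algebraic_over sc a"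
  shows "\<exists>e\<in>V. e * e = e \<and> (\<exists>N. \<forall>m\<ge>N. a^m = a^m * e \<and> a^m = e * a^m)"
proof -
  interpret alg sc a using A by unfold_locales
  obtain p :: "'k poly" where p: "p \<noteq> 0" "ev p = 0"
    using alg unfolding algebraic_over_def ev_def by blast
  obtain s u v q where s: "s \<ge> 1" "u * [:0,1:]^s + v*q = 1" "[:0,1:]^s * q = [:0,1:] * p"
    using poly_split[OF p(1)] by blast
  define e where "e = ev u * a ^ s"
  have eV: "e \<in> V" unfolding e_def using ev_in_V[OF V aV, of u "s - 1"] s(1) by simp
  have "a^s * ev q = ev ([:0,1:]^s * q)" by (simp only: ev_mult ev_Xp)
  also have "\<dots> = ev ([:0,1:] * p)" by (simp only: s(3))
  also have "\<dots> = 0" by (simp only: ev_mult ev_X p(2) mult_zero_right)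
  finally have P0: "a^s * ev q = 0" .
  have "ev (u * [:0,1:]^s + v*q) = ev 1" by (simp only: s(2))
  then have one: "e + ev v * ev q = 1" unfolding e_def by (simp only: ev_add ev_mult ev_Xp ev_one)
  have es: "a^s * e = a^s"
  proof -
    have c1: "a^s * ev v = ev v * a^s" using ev_comm[of "[:0,1:]^s" v] by (simp only: ev_Xp)
    have "a^s * (ev v * ev q) = ev v * (a^s * ev q)"
      by (simp only: mult.assoc[symmetric] c1)
    then have z: "a^s * (ev v * ev q) = 0" using P0 by simp
    have "a^s = a^s * (e + ev v * ev q)" using one by simp
    also have "\<dots> = a^s * e" by (simp only: distrib_left z add_0_right)
    finally show ?thesis by simp
  qed
  have ecomm: "\<And>n. e * a^n = a^n * e"
  proof -
    fix n
    have c1: "ev u * a^n = a^n * ev u" using ev_comm[of u "[:0,1:]^n"] by (simp only: ev_Xp)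
    have c2: "a^s * a^n = a^n * a^s" by (simp only: power_add[symmetric] add.commute)
    have "e * a^n = ev u * (a^s * a^n)" unfolding e_def by (simp only: mult.assoc)
    also have "\<dots> = (ev u * a^n) * a^s" by (simp only: c2 mult.assoc)
    also have "\<dots> = a^n * e" unfolding e_def by (simp only: c1 mult.assoc)
    finally show "e * a^n = a^n * e" .
  qed
  have ee: "e * e = e"
  proof -
    have "e * e = ev u * (a^s * e)" by (simp only: e_def mult.assoc)
    also have "\<dots> = ev u * a^s" using es by simp
    also have "\<dots> = e" by (simp only: e_def)
    finally show ?thesis .
  qed
  have "\<forall>m\<ge>s. a^m = a^m * e \<and> a^m = e * a^m"
  proof (intro allI impI)
    fix m assume "s \<le> m"
    then have "a^m = a^(m-s) * a^s" by (simp add: power_add[symmetric])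
    then have "a^m = a^m * e" using es by (metis mult.assoc)
    then show "a^m = a^m * e \<and> a^m = e * a^m" using ecomm by simp
  qed
  then show ?thesis using eV ee by blast
qed

theorem theorem4p2:
  fixes sc :: "'k::field \<Rightarrow> 'a::ring_1 \<Rightarrow> 'a"
    and t :: mtype and V :: "'a set"
  assumes "is_algebra sc"
    and "is_subspace sc V"
    and "\<forall>a\<in>rad V. algebraic_over sc a"
  shows "mathieu t V \<longleftrightarrow> (\<forall>e\<in>V. e * e = e \<longrightarrow> gen_ideal t e \<subseteq> V)"
proof
  assume M: "mathieu t V"
  show "\<forall>e\<in>V. e * e = e \<longrightarrow> gen_ideal t e \<subseteq> V"
  proof (intro ballI impI subsetI)
    fix e x assume eV: "e \<in> V" and ee: "e * e = e" and x: "x \<in> gen_ideal t e"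
    have pw: "\<And>m. m \<ge> 1 \<Longrightarrow> e ^ m = e"
    proof -
      fix m :: nat assume "m \<ge> 1"
      then show "e ^ m = e"
      proof (induction m rule: dec_induct)
        case base then show ?case by simp
      next
        case (step n) then show ?case using ee by simp
      qed
    qed
    then have am: "\<forall>m\<ge>1. e ^ m \<in> V" using eV by simp
    have L: "\<And>b. b * e \<in> V" if H: "\<forall>b. \<exists>N. \<forall>m\<ge>N. b * e ^ m \<in> V"
    proof -
      fix b obtain N where "\<forall>m\<ge>N. b * e ^ m \<in> V" using H by blast
      then have "b * e ^ (N+1) \<in> V" by (meson le_add1)
      then show "b * e \<in> V" using pw[of "N+1"] by simp
    qed
    have R: "\<And>b. e * b \<in> V" if H: "\<forall>b. \<exists>N. \<forall>m\<ge>N. e ^ m * b \<in> V"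
    proof -
      fix b obtain N where "\<forall>m\<ge>N. e ^ m * b \<in> V" using H by blast
      then have "e ^ (N+1) * b \<in> V" by (meson le_add1)
      then show "e * b \<in> V" using pw[of "N+1"] by simp
    qed
    have T: "\<And>b c. b * e * c \<in> V" if H: "\<forall>b c. \<exists>N. \<forall>m\<ge>N. b * e ^ m * c \<in> V"
    proof -
      fix b c obtain N where "\<forall>m\<ge>N. b * e ^ m * c \<in> V" using H by blast
      then have "b * e ^ (N+1) * c \<in> V" by (meson le_add1)
      then show "b * e * c \<in> V" using pw[of "N+1"] by simp
    qed
    have addV: "\<And>x y. x \<in> V \<Longrightarrow> y \<in> V \<Longrightarrow> x + y \<in> V" and zV: "0 \<in> V"
      using assms(2) unfolding is_subspace_def by auto
    show "x \<in> V"
    proof (cases t)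
      case LeftT then show ?thesis using M am x L unfolding mathieu_def gen_ideal_def by auto
    next
      case RightT then show ?thesis using M am x R unfolding mathieu_def gen_ideal_def by auto
    next
      case PreTwoSidedT then show ?thesis using M am x L R addV unfolding mathieu_def gen_ideal_def by auto
    next
      case TwoSidedT
      then have T': "\<And>b c. b * e * c \<in> V" using M am T unfolding mathieu_def by auto
      have "x \<in> {(\<Sum>i<n. b i * e * c i) | (n::nat) b c. True}" using x TwoSidedT unfolding gen_ideal_def by simp
      then obtain n :: nat and b c where xe: "x = (\<Sum>i<n. b i * e * c i)" by blast
      have "(\<Sum>i<n. b i * e * c i) \<in> V"
        by (induction n) (simp_all add: zV addV T')
      then show ?thesis using xe by simp
    qed
  qed
next
  assume I: "\<forall>e\<in>V. e * e = e \<longrightarrow> gen_ideal t e \<subseteq> V"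
  show "mathieu t V" unfolding mathieu_def
  proof (intro allI impI)
    fix a assume aV: "\<forall>m\<ge>1. a ^ m \<in> V"
    then have "a \<in> rad V" unfolding rad_def by blast
    then have "algebraic_over sc a" using assms(3) by blast
    then obtain e N where eV: "e \<in> V" "e * e = e" and N: "\<forall>m\<ge>N. a^m = a^m * e \<and> a^m = e * a^m"
      using idem_exists[OF assms(1,2) aV] by blast
    have sub: "gen_ideal t e \<subseteq> V" using I eV by blast
    have Lk: "\<forall>b. \<exists>N. \<forall>m\<ge>N. b * a ^ m \<in> V" if "t = LeftT \<or> t = PreTwoSidedT"
    proof (intro allI exI[of _ N] impI)
      fix b m assume "N \<le> m"
      then have "b * a^m = (b * a^m) * e" using N by (metis mult.assoc)
      moreover have "(b * a^m) * e \<in> gen_ideal t e" using that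
        unfolding gen_ideal_def by (elim disjE; simp; metis add_0 add_0_right mult_zero_right mult_zero_left)
      ultimately show "b * a ^ m \<in> V" using sub by auto
    qed
    have Rk: "\<forall>b. \<exists>N. \<forall>m\<ge>N. a ^ m * b \<in> V" if "t = RightT \<or> t = PreTwoSidedT"
    proof (intro allI exI[of _ N] impI)
      fix b m assume "N \<le> m"
      then have "a^m * b = e * (a^m * b)" using N by (metis mult.assoc)
      moreover have "e * (a^m * b) \<in> gen_ideal t e" using that
        unfolding gen_ideal_def by (elim disjE; simp; metis add_0 add_0_right mult_zero_right mult_zero_left)
      ultimately show "a ^ m * b \<in> V" using sub by auto
    qed
    have Tk: "\<forall>b c. \<exists>N. \<forall>m\<ge>N. b * a ^ m * c \<in> V" if "t = TwoSidedT"
    proof (intro allI exI[of _ N] impI)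
      fix b c m assume "N \<le> m"
      then have "b * a^m * c = (b * a^m) * e * c" using N by (metis mult.assoc)
      moreover have "(b * a^m) * e * c \<in> gen_ideal t e"
      proof -
        have eq: "(b * a^m) * e * c = (\<Sum>i<(1::nat). (\<lambda>_. b*a^m) i * e * (\<lambda>_. c) i)" by simp
        have "(\<Sum>i<(1::nat). (\<lambda>_. b*a^m) i * e * (\<lambda>_. c) i) \<in> {(\<Sum>i<n. b i * e * c i) | (n::nat) b c. True}"
          unfolding mem_Collect_eq
          by (rule exI[of _ "1::nat"], rule exI[of _ "\<lambda>_. b*a^m"], rule exI[of _ "\<lambda>_. c"]) simp
        then show ?thesis using that eq unfolding gen_ideal_def by simp
      qed
      ultimately show "b * a ^ m * c \<in> V" using sub by auto
    qed
    show "case t of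
        LeftT \<Rightarrow> (\<forall>b. \<exists>N. \<forall>m\<ge>N. b * a ^ m \<in> V)
      | RightT \<Rightarrow> (\<forall>b. \<exists>N. \<forall>m\<ge>N. a ^ m * b \<in> V)
      | PreTwoSidedT \<Rightarrow> (\<forall>b. \<exists>N. \<forall>m\<ge>N. b * a ^ m \<in> V) \<and> (\<forall>b. \<exists>N. \<forall>m\<ge>N. a ^ m * b \<in> V)
      | TwoSidedT \<Rightarrow> (\<forall>b c. \<exists>N. \<forall>m\<ge>N. b * a ^ m * c \<in> V)"
      using Lk Rk Tk by (cases t) auto
  qed
qed

end
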